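(* Let $G_3^*$ be the set of positive integers $k$ such that every exponent occurring in the prime factorization of $k$ (i.e. $v_p(k)$ for every prime $p \mid k$) belongs to $A_3^*$, where $A_3^*$ is the set of nonnegative integers whose base-$3$ expansion contains no digit $2$. Then the upper uniform density of $G_3^*$ satisfies $\overline{u}(G_3^* ) \le 7/8$.
   Context: $A_3^*$ is the greedy set of nonnegative integers free of 3-term arithmetic progressions, and $G_3^*$ (by Rankin's characterization) is the greedy set of positive integers free of 3-term geometric progressions $a, ar, ar^2$ with integer ratio $r>1$. For $A\subseteq \mathbb{N}$, the upper uniform density is $\overline{u}(A) = \lim_{s\to\infty} \max_{n\ge 0} \frac{1}{s}\,\#\{a\in A : n < a \le n+s\}$. *)

theory Defs
  imports "HOL-Analysis.Analysis" "HOL-Computational_Algebra.Primes"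
begin

definition A3star :: "nat set" where
  "A3star = {n. \<forall>i::nat. (n div 3 ^ i) mod 3 \<noteq> 2}"

definition G3star :: "nat set" where
  "G3star = {k. k > 0 \<and> (\<forall>p. prime p \<and> p dvd k \<longrightarrow> multiplicity p k \<in> A3star)}"

definition window_max :: "nat set \<Rightarrow> nat \<Rightarrow> nat" where
  "window_max A s = (SUP n. card {a \<in> A. n < a \<and> a \<le> n + s})"

definition upper_uniform_density :: "nat set \<Rightarrow> real" where
  "upper_uniform_density A = lim (\<lambda>s. real (window_max A s) / real s)"

end

theory Submission
  imports Defs
begin

lemma mult4: "multiplicity (2::nat) (8*j+4) = 2"
proof -
  have "(8*j+4::nat) = 2^2 * (2*j+1)" by simp
  moreover have "multiplicity (2::nat) (2*j+1) = 0"
    by (rule not_dvd_imp_multiplicity_0) presburger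
  moreover have "multiplicity (2::nat) (2^2 * (2*j+1)) = multiplicity (2::nat) (2^2) + multiplicity (2::nat) (2*j+1)"
    by (rule prime_elem_multiplicity_mult_distrib) auto
  moreover have "multiplicity (2::nat) (2^2) = 2"
    by (rule multiplicity_prime_power) simp
  ultimately show ?thesis by (simp add: add.commute)
qed

lemma notG: "(8*j+4::nat) \<notin> G3star"
proof
  assume "8*j+4 \<in> G3star"
  then have "multiplicity (2::nat) (8*j+4) \<in> A3star"
    unfolding G3star_def by (auto dest!: spec[of _ 2] simp: dvd_def intro: exI[of _ "4*j+2"])
  then show False using mult4[of j] unfolding A3star_def
    by (auto dest: spec[of _ 0])
qed

lemma card_win_le:
  fixes A :: "nat set"
  shows "card {a \<in> A. n < a \<and> a \<le> n + s} \<le> s"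
proof -
  have "{a \<in> A. n < a \<and> a \<le> n + s} \<subseteq> {n<..n+s}" by auto
  then have "card {a \<in> A. n < a \<and> a \<le> n + s} \<le> card {n<..n+s}"
    by (rule card_mono[rotated]) simp
  then show ?thesis by simp
qed

lemma bdd_win:
  fixes A :: "nat set"
  shows "bdd_above (range (\<lambda>n. card {a \<in> A. n < a \<and> a \<le> n + s}))"
  using card_win_le by (auto intro!: bdd_aboveI[of _ s])

lemma wm_le:
  fixes A :: "nat set"
  shows "window_max A s \<le> s"
  unfolding window_max_def by (rule cSUP_least) (auto simp: card_win_le)

lemma wm_ge:
  fixes A :: "nat set"
  shows "card {a \<in> A. n < a \<and> a \<le> n + s} \<le> window_max A s"
  unfolding window_max_def by (rule cSUP_upper[OF _ bdd_win]) simp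

lemma wm_sub:
  fixes A :: "nat set"
  shows "window_max A (s + t) \<le> window_max A s + window_max A t"
  unfolding window_max_def[of A "s+t"]
proof (rule cSUP_least)
  fix n
  have "{a \<in> A. n < a \<and> a \<le> n + (s + t)} \<subseteq>
        {a \<in> A. n < a \<and> a \<le> n + s} \<union> {a \<in> A. (n+s) < a \<and> a \<le> (n + s) + t}" by auto
  then have "card {a \<in> A. n < a \<and> a \<le> n + (s + t)} \<le>
        card ({a \<in> A. n < a \<and> a \<le> n + s} \<union> {a \<in> A. (n+s) < a \<and> a \<le> (n + s) + t})"
    by (rule card_mono[rotated]) auto
  also have "\<dots> \<le> card {a \<in> A. n < a \<and> a \<le> n + s} + card {a \<in> A. (n+s) < a \<and> a \<le> (n + s) + t}"
    by (rule card_Un_le)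
  also have "\<dots> \<le> window_max A s + window_max A t"
    using wm_ge[of A n s] wm_ge[of A "n+s" t] by simp
  finally show "card {a \<in> A. n < a \<and> a \<le> n + (s + t)} \<le> window_max A s + window_max A t" .
qed simp

lemma wm8: "window_max G3star 8 \<le> 7"
  unfolding window_max_def
proof (rule cSUP_least)
  fix n :: nat
  define k where "k = 8 * ((n + 4) div 8) + 4"
  have k: "n < k" "k \<le> n + 8" unfolding k_def by presburger+
  have "{a \<in> G3star. n < a \<and> a \<le> n + 8} \<subseteq> {n<..n+8} - {k}"
    using notG[of "(n + 4) div 8"] unfolding k_def by auto
  then have "card {a \<in> G3star. n < a \<and> a \<le> n + 8} \<le> card ({n<..n+8} - {k})"
    by (rule card_mono[rotated]) simp
  also have "\<dots> = 7" using k by (simp add: card_Diff_singleton)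
  finally show "card {a \<in> G3star. n < a \<and> a \<le> n + 8} \<le> 7" .
qed simp

lemma fekete_step:
  fixes a :: "nat \<Rightarrow> nat"
  assumes sub: "\<And>s t. a (s + t) \<le> a s + a t" and bd: "\<And>s. a s \<le> s"
  shows "a (q * m + r) \<le> q * a m + r"
proof (induction q)
  case 0 then show ?case using bd[of r] by simp
next
  case (Suc q)
  have "a (Suc q * m + r) = a (m + (q * m + r))" by (simp add: add.assoc)
  also have "\<dots> \<le> a m + a (q*m+r)" by (rule sub)
  finally show ?case using Suc by simp
qed

lemma fekete_upper:
  fixes a :: "nat \<Rightarrow> nat"
  assumes sub: "\<And>s t. a (s + t) \<le> a s + a t" and bd: "\<And>s. a s \<le> s"
    and m: "m \<ge> 1" and s: "s \<ge> 1"
  shows "real (a s) / real s \<le> real (a m) / real m + real m / real s"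
proof -
  have "a s \<le> (s div m) * a m + s mod m"
    using fekete_step[OF sub bd, of "s div m" m "s mod m"] by simp
  also have "s mod m \<le> m" using m by (simp add: less_imp_le)
  finally have 1: "real (a s) \<le> real (s div m) * real (a m) + real m"
    by (metis add_le_mono le_refl of_nat_add of_nat_le_iff of_nat_mult order_trans)
  have "real (s div m) \<le> real s / real m"
    by (rule of_nat_div_le_of_nat)
  then have "real (s div m) * real (a m) \<le> real s / real m * real (a m)"
    by (rule mult_right_mono) simp
  with 1 have "real (a s) \<le> real s * (real (a m) / real m) + real m" by simp
  then have "real (a s) / real s \<le> (real s * (real (a m) / real m) + real m) / real s"
    using s by (simp add: divide_right_mono)
  also have "\<dots> = real (a m) / real m + real m / real s"
    using s by (simp add: field_simps)
  finally show ?thesis .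
qed

lemma fekete:
  fixes a :: "nat \<Rightarrow> nat"
  assumes sub: "\<And>s t. a (s + t) \<le> a s + a t" and bd: "\<And>s. a s \<le> s"
  defines "L \<equiv> Inf ((\<lambda>m. real (a m) / real m) ` {1..})"
  shows "(\<lambda>s. real (a s) / real s) \<longlonglongrightarrow> L"
proof (rule LIMSEQ_I)
  fix e :: real assume e: "e > 0"
  have bdd: "bdd_below ((\<lambda>m. real (a m) / real m) ` {1..})"
    by (rule bdd_belowI[of _ 0]) auto
  have low: "L \<le> real (a s) / real s" if "s \<ge> 1" for s
    unfolding L_def using that by (intro cINF_lower[OF bdd]) auto
  have "\<exists>x\<in>(\<lambda>m. real (a m) / real m) ` {1..}. x < L + e/2"
    unfolding L_def by (rule cInf_lessD) (use e L_def in auto)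
  then have "\<exists>m\<in>{1..}. real (a m) / real m < L + e/2" by blast
  then obtain m where m: "m \<ge> 1" "real (a m) / real m < L + e/2" by auto
  obtain N :: nat where N: "real N > 2 * real m / e" using reals_Archimedean2 by blast
  show "\<exists>no. \<forall>n\<ge>no. norm (real (a n) / real n - L) < e"
  proof (intro exI[of _ "N+1"] allI impI)
    fix n assume n: "N + 1 \<le> n"
    then have n1: "n \<ge> 1" by simp
    have "real m / real n < e / 2"
    proof -
      have "2 * real m / e < real n" using N n by linarith
      then have "2 * real m < e * real n" using e by (simp add: field_simps)
      then show ?thesis using n1 e by (simp add: field_simps)
    qed
    then have "real (a n) / real n < L + e"
      using fekete_upper[OF sub bd m(1) n1] m(2) by linarith
    with low[OF n1] show "norm (real (a n) / real n - L) < e" by simp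
  qed
qed

theorem mainTheorem1:
  shows "upper_uniform_density G3star \<le> 7 / 8"
proof -
  let ?a = "window_max G3star"
  let ?L = "Inf ((\<lambda>m. real (?a m) / real m) ` {1..})"
  have lim: "(\<lambda>s. real (?a s) / real s) \<longlonglongrightarrow> ?L"
    by (rule fekete) (auto intro: wm_sub wm_le)
  have "upper_uniform_density G3star = ?L"
    unfolding upper_uniform_density_def using lim by (rule limI)
  also have "?L \<le> real (?a 8) / real 8"
    by (rule cINF_lower) (auto intro!: bdd_belowI[of _ 0])
  also have "\<dots> \<le> 7 / 8" using wm8 by simp
  finally show ?thesis .
qed

end
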